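(* Let $0<s\le1$, let $\Delta_s\subset\mathbb C$ be the closed disk of radius $s$ and $\Delta_s^*=\Delta_s\setminus\{0\}$. Let $g$ be a smooth real-valued function on an open neighbourhood of $\Delta_s^*$, and put $\omega=\frac{i}{\pi}\partial\bar\partial g$, $\eta=\frac{i}{\pi}\bar\partial g$. Suppose $\omega$ is semipositive and that there exist $a\in\mathbb R$ and a subpolynomial function $\mu$ with $-\log\mu(1/|z|)\le g(z)+a\log|z|\le\log\mu(1/|z|)$ on $\Delta_s^*$. Then $\int_{\Delta_s}\omega:=\lim_{\varepsilon\to0}\int_{\Delta_s\setminus\Delta_\varepsilon}\omega$ exists in $\mathbb R$, $\lim_{t\to0}\int_{\partial\Delta_t}\eta=-a$, and $$0\le\int_{\Delta_s}\omega=\int_{\partial\Delta_s}\eta+a.$$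
   Context: A function $\mu\colon\mathbb R_{>0}\to\mathbb R_{>0}$ is subpolynomial if $\lim_{x\to\infty}\mu(x)/x^n=0$ for every $n>0$. A $(1,1)$-form $\omega$ is semipositive if $\int_{\Delta_t}\psi^*\omega\ge0$ for every continuous map $\psi$ from a closed disk $\Delta_t$ into the domain that is holomorphic on the interior. Boundary circles are positively oriented. *)

theory Defs
  imports "HOL-Analysis.Analysis"
begin

definition subpolynomial :: "(real \<Rightarrow> real) \<Rightarrow> bool" where
  "subpolynomial \<mu> \<longleftrightarrow> (\<forall>x>0. \<mu> x > 0) \<and>
     (\<forall>n::real>0. ((\<lambda>x. \<mu> x / x powr n) \<longlongrightarrow> 0) at_top)"

text \<open>Smooth (C-infinity) real-valued functions on an open set U of C = R^2:
  all iterated partial derivatives (indexed by a list of directions,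
  True = x-direction, False = y-direction) exist and are differentiable on U.\<close>
definition smooth_on :: "complex set \<Rightarrow> (complex \<Rightarrow> real) \<Rightarrow> bool" where
  "smooth_on U g \<longleftrightarrow> (\<exists>D :: bool list \<Rightarrow> complex \<Rightarrow> real.
     (\<forall>z\<in>U. D [] z = g z) \<and>
     (\<forall>l. \<forall>z\<in>U. (D l has_derivative (\<lambda>h. Re h * D (True # l) z + Im h * D (False # l) z)) (at z)))"

definition partial_x :: "(complex \<Rightarrow> real) \<Rightarrow> complex \<Rightarrow> real" where
  "partial_x g z = deriv (\<lambda>t::real. g (z + of_real t)) 0"

definition partial_y :: "(complex \<Rightarrow> real) \<Rightarrow> complex \<Rightarrow> real" where
  "partial_y g z = deriv (\<lambda>t::real. g (z + \<i> * of_real t)) 0"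

definition laplacian :: "(complex \<Rightarrow> real) \<Rightarrow> complex \<Rightarrow> real" where
  "laplacian g z = partial_x (partial_x g) z + partial_y (partial_y g) z"

text \<open>\<omega> = (i/\<pi>) \<partial>\<bar>\<partial> g = (1/(2\<pi>)) (\<Delta>g) dx\<and>dy ; this is its density w.r.t. dx\<and>dy.\<close>
definition omega_density :: "(complex \<Rightarrow> real) \<Rightarrow> complex \<Rightarrow> real" where
  "omega_density g z = laplacian g z / (2 * pi)"

text \<open>\<eta> = (i/\<pi>) \<bar>\<partial> g = (i/\<pi>) (\<partial>g/\<partial>\<bar>z) d\<bar>z, with \<partial>g/\<partial>\<bar>z = (g_x + i g_y)/2.
  This is the coefficient of d\<bar>z.\<close>
definition eta_coeff :: "(complex \<Rightarrow> real) \<Rightarrow> complex \<Rightarrow> complex" where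
  "eta_coeff g z = (\<i> / of_real pi) * ((of_real (partial_x g z) + \<i> * of_real (partial_y g z)) / 2)"

text \<open>Integral of the (0,1)-form f d\<bar>z over the positively oriented circle |z| = t,
  parametrised by \<theta> \<mapsto> t e^{i\<theta>}, \<theta> \<in> [0, 2\<pi>].\<close>
definition circle_integral_dzbar :: "(complex \<Rightarrow> complex) \<Rightarrow> real \<Rightarrow> complex" where
  "circle_integral_dzbar f t =
     integral {0..2*pi} (\<lambda>\<theta>. f (of_real t * exp (\<i> * of_real \<theta>)) *
                               cnj (\<i> * of_real t * exp (\<i> * of_real \<theta>)))"

text \<open>Semipositivity of \<omega> on the domain U: for every continuous \<psi> from a closed disk
  \<Delta>_t into U, holomorphic on the interior, \<integral>_{\<Delta>_t} \<psi>^*\<omega> \<ge> 0, where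
  \<psi>^*\<omega> = (density \<circ> \<psi>) |\<psi>'|^2 du\<and>dv.\<close>
definition semipositive_on :: "complex set \<Rightarrow> (complex \<Rightarrow> real) \<Rightarrow> bool" where
  "semipositive_on U g \<longleftrightarrow> (\<forall>t>0. \<forall>\<psi>. continuous_on (cball 0 t) \<psi> \<and>
       \<psi> holomorphic_on ball 0 t \<and> \<psi> ` cball 0 t \<subseteq> U \<longrightarrow>
       integral (ball 0 t) (\<lambda>w. omega_density g (\<psi> w) * (cmod (deriv \<psi> w))\<^sup>2) \<ge> 0)"

end

theory Submission
  imports Defs
begin

definition c2v :: "complex \<Rightarrow> real^2" where "c2v z = vector [Re z, Im z]"
definition v2c :: "real^2 \<Rightarrow> complex" where "v2c x = Complex (x$1) (x$2)"
definition p2v :: "real\<times>real \<Rightarrow> real^2" where "p2v q = vector [fst q, snd q]"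
definition v2p :: "real^2 \<Rightarrow> real\<times>real" where "v2p x = (x$1, x$2)"

lemma vec2_eq: "(x::real^2) = y \<longleftrightarrow> x$1 = y$1 \<and> x$2 = y$2"
  by (metis (full_types) exhaust_2 vec_eq_iff)

lemma c2v_v2c[simp]: "c2v (v2c x) = x" by (simp add: c2v_def v2c_def vec2_eq)
lemma v2c_c2v[simp]: "v2c (c2v z) = z" by (simp add: c2v_def v2c_def)
lemma p2v_v2p[simp]: "p2v (v2p x) = x" by (simp add: p2v_def v2p_def vec2_eq)
lemma v2p_p2v[simp]: "v2p (p2v q) = q" by (simp add: p2v_def v2p_def)
lemma c2v_nth[simp]: "c2v z $ 1 = Re z" "c2v z $ 2 = Im z" by (simp_all add: c2v_def)
lemma p2v_nth[simp]: "p2v q $ 1 = fst q" "p2v q $ 2 = snd q" by (simp_all add: p2v_def)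
lemma v2c_simps[simp]: "Re (v2c x) = x$1" "Im (v2c x) = x$2" by (simp_all add: v2c_def)

lemma mem_cbox2: "(x::real^2) \<in> cbox a b \<longleftrightarrow> a$1 \<le> x$1 \<and> x$1 \<le> b$1 \<and> a$2 \<le> x$2 \<and> x$2 \<le> b$2"
  by (metis (full_types) exhaust_2 mem_box_cart(2))

lemma c2v_box: "c2v ` cbox u v = cbox (c2v u) (c2v v)"
proof (rule set_eqI, rule iffI)
  fix x assume "x \<in> c2v ` cbox u v" then show "x \<in> cbox (c2v u) (c2v v)"
    unfolding mem_cbox2 in_cbox_complex_iff by (auto simp: mem_cbox2 in_cbox_complex_iff)
next
  fix x assume "x \<in> cbox (c2v u) (c2v v)"
  then have "v2c x \<in> cbox u v" unfolding mem_cbox2 in_cbox_complex_iff by simp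
  then show "x \<in> c2v ` cbox u v" by (rule image_eqI[rotated]) simp
qed

lemma v2c_box: "v2c ` cbox u v = cbox (v2c u) (v2c v)"
proof (rule set_eqI, rule iffI)
  fix x assume "x \<in> v2c ` cbox u v" then show "x \<in> cbox (v2c u) (v2c v)"
    unfolding mem_cbox2 in_cbox_complex_iff by (auto simp: mem_cbox2 in_cbox_complex_iff)
next
  fix x assume "x \<in> cbox (v2c u) (v2c v)"
  then have "c2v x \<in> cbox u v" unfolding mem_cbox2 in_cbox_complex_iff by simp
  then show "x \<in> v2c ` cbox u v" by (rule image_eqI[rotated]) simp
qed

lemma p2v_box: "p2v ` cbox u v = cbox (p2v u) (p2v v)"
proof (rule set_eqI, rule iffI)
  fix x assume "x \<in> p2v ` cbox u v" then show "x \<in> cbox (p2v u) (p2v v)"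
    unfolding mem_cbox2 by (cases u, cases v) (auto simp: cbox_Pair_eq)
next
  fix x assume "x \<in> cbox (p2v u) (p2v v)"
  then have "v2p x \<in> cbox u v" unfolding mem_cbox2 by (cases u, cases v) (simp add: cbox_Pair_eq v2p_def)
  then show "x \<in> p2v ` cbox u v" by (rule image_eqI[rotated]) simp
qed

lemma v2p_box: "v2p ` cbox u v = cbox (v2p u) (v2p v)"
proof (rule set_eqI, rule iffI)
  fix x assume "x \<in> v2p ` cbox u v" then show "x \<in> cbox (v2p u) (v2p v)"
    unfolding mem_cbox2 by (auto simp: cbox_Pair_eq v2p_def mem_cbox2)
next
  fix x assume "x \<in> cbox (v2p u) (v2p v)"
  then have "p2v x \<in> cbox u v" unfolding mem_cbox2 by (cases x) (simp add: cbox_Pair_eq v2p_def)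
  then show "x \<in> v2p ` cbox u v" by (rule image_eqI[rotated]) simp
qed

lemma content2: "Henstock_Kurzweil_Integration.content (cbox a (b::real^2)) = (if cbox a b = {} then 0 else (b$1 - a$1) * (b$2 - a$2))"
  by (simp add: content_cbox_if_cart UNIV_2)

lemma content_c: "Henstock_Kurzweil_Integration.content (cbox a (b::complex)) = (if cbox a b = {} then 0 else (Re b - Re a) * (Im b - Im a))"
  by (simp add: content_cbox_if Basis_complex_def inner_complex_def)

lemma c2v_content: "Henstock_Kurzweil_Integration.content (c2v ` cbox u v) = Henstock_Kurzweil_Integration.content (cbox u v)"
proof -
  have e: "cbox (c2v u) (c2v v) = {} \<longleftrightarrow> cbox u v = {}" using c2v_box[of u v] by auto
  show ?thesis unfolding c2v_box content2 content_c e by simp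
qed

lemma p2v_content: "Henstock_Kurzweil_Integration.content (p2v ` cbox u v) = Henstock_Kurzweil_Integration.content (cbox u v)"
proof -
  have e: "cbox (p2v u) (p2v v) = {} \<longleftrightarrow> cbox u v = {}" using p2v_box[of u v] by auto
  obtain a b where u: "u = (a,b)" by (cases u)
  obtain c d where v: "v = (c,d)" by (cases v)
  have "cbox u v = {} \<longleftrightarrow> \<not> (a \<le> c \<and> b \<le> d)" unfolding u v cbox_Pair_eq_0 by auto
  then show ?thesis unfolding p2v_box content2 e using content_Pair[of a b c d]
    by (simp add: u v)
qed

lemma linear_c2v: "linear c2v" 
  by (auto simp: linear_iff vec2_eq)
lemma linear_v2c: "linear v2c" 
  by (auto simp: linear_iff complex_eq_iff)
lemma linear_p2v: "linear p2v" 
  by (auto simp: linear_iff vec2_eq)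
lemma linear_v2p: "linear v2p" 
  by (auto simp: linear_iff v2p_def)



lemma integral_transfer:
  fixes T :: "'a::euclidean_space \<Rightarrow> 'b::euclidean_space" and Ti :: "'b \<Rightarrow> 'a"
    and f :: "'b \<Rightarrow> 'c::banach"
  assumes TTi: "\<And>y. T (Ti y) = y" and TiT: "\<And>x. Ti (T x) = x"
   and cT: "\<And>x. continuous (at x) T"
   and boxT: "\<And>u v. \<exists>w z. T ` cbox u v = cbox w z"
   and boxTi: "\<And>u v. \<exists>w z. Ti ` cbox u v = cbox w z"
   and contT: "\<And>u v. Henstock_Kurzweil_Integration.content (T ` cbox u v) = Henstock_Kurzweil_Integration.content (cbox u v)"
   and S: "bounded S" and fi: "(f has_integral i) S"
  shows "((f \<circ> T) has_integral i) (Ti ` S)"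
proof -
  obtain a b where ab: "S \<subseteq> cbox a b" using S bounded_subset_cbox_symmetric by metis
  have "((\<lambda>x. if x \<in> S then f x else 0) has_integral i) (cbox a b)"
    using has_integral_restrict[OF ab] fi by blast
  from has_integral_twiddle[where r=1 and g=T and h=Ti, OF _ TiT TTi cT boxT boxTi _ this]
  have 1: "((\<lambda>x. if T x \<in> S then f (T x) else 0) has_integral i) (Ti ` cbox a b)"
    using contT by simp
  have eq: "T x \<in> S \<longleftrightarrow> x \<in> Ti ` S" for x
    by (metis TiT TTi image_iff)
  have sub: "Ti ` S \<subseteq> Ti ` cbox a b" using ab by blast
  show ?thesis using 1 unfolding eq has_integral_restrict[OF sub] by (simp add: o_def)
qed

lemma transfer_c:
  fixes F :: "real^2 \<Rightarrow> 'c::banach"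
  assumes "bounded S" "(F has_integral i) S"
  shows "((F \<circ> c2v) has_integral i) (v2c ` S)"
proof (rule integral_transfer[OF _ _ _ _ _ _ assms])
  show "isCont c2v x" for x using linear_c2v linear_continuous_at linear_conv_bounded_linear by blast
qed (use c2v_box v2c_box c2v_content in auto)

lemma transfer_p:
  fixes F :: "real^2 \<Rightarrow> 'c::banach"
  assumes "(F has_integral i) (cbox a b)"
  shows "((F \<circ> p2v) has_integral i) (cbox (v2p a) (v2p b))"
proof -
  have "((F \<circ> p2v) has_integral i) (v2p ` cbox a b)"
  proof (rule integral_transfer[OF _ _ _ _ _ _ _ assms])
    show "isCont p2v x" for x using linear_p2v linear_continuous_at linear_conv_bounded_linear by blast
    show "\<exists>w z. v2p ` cbox u v = cbox w z" for u v using v2p_box by blast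
    show "\<exists>w z. p2v ` cbox u v = cbox w z" for u v using p2v_box by blast
  qed (use p2v_content in auto)
  then show ?thesis by (simp add: v2p_box)
qed

definition polar :: "real^2 \<Rightarrow> real^2" where
  "polar x = c2v (complex_of_real (x$2) * exp (\<i> * complex_of_real (x$1)))"

definition polar' :: "real^2 \<Rightarrow> real^2 \<Rightarrow> real^2" where
  "polar' x = (\<lambda>h. c2v (complex_of_real (h$2) * exp (\<i> * complex_of_real (x$1)) +
       complex_of_real (x$2) * (exp (\<i> * complex_of_real (x$1)) * (\<i> * complex_of_real (h$1)))))"

lemma polar_deriv: "(polar has_derivative polar' x) (at x within S)"
proof -
  have bl: "bounded_linear c2v" using linear_c2v linear_conv_bounded_linear by blast
  have d1: "((\<lambda>x::real^2. x$1) has_derivative (\<lambda>h. h$1)) (at x within S)"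
    by (rule bounded_linear_imp_has_derivative[OF bounded_linear_vec_nth])
  have d2: "((\<lambda>x::real^2. x$2) has_derivative (\<lambda>h. h$2)) (at x within S)"
    by (rule bounded_linear_imp_has_derivative[OF bounded_linear_vec_nth])
  have g: "((\<lambda>x::real^2. \<i> * complex_of_real (x$1)) has_derivative (\<lambda>h. \<i> * complex_of_real (h$1))) (at x within S)"
    by (auto intro!: derivative_eq_intros d1)
  have ex: "(exp has_derivative (\<lambda>h. exp (\<i> * complex_of_real (x$1)) * h)) (at (\<i> * complex_of_real (x$1)))"
    using DERIV_exp[THEN has_field_derivative_imp_has_derivative] by blast
  have e: "((\<lambda>x::real^2. exp (\<i> * complex_of_real (x$1))) has_derivative (\<lambda>h. exp (\<i> * complex_of_real (x$1)) * (\<i> * complex_of_real (h$1)))) (at x within S)"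
    using has_derivative_compose[OF g ex] by simp
  have "((\<lambda>x::real^2. complex_of_real (x$2) * exp (\<i> * complex_of_real (x$1))) has_derivative
     (\<lambda>h. complex_of_real (h$2) * exp (\<i> * complex_of_real (x$1)) +
       complex_of_real (x$2) * (exp (\<i> * complex_of_real (x$1)) * (\<i> * complex_of_real (h$1))))) (at x within S)"
    by (rule derivative_eq_intros has_derivative_mult has_derivative_of_real d2 e)+ (simp add: algebra_simps)
  from bounded_linear.has_derivative[OF bl this] show ?thesis
    unfolding polar_def polar'_def o_def by simp
qed

lemma trig1: "cos a * (cos a * r) + sin a * (sin a * r) = (r::real)"
proof -
  have "cos a * (cos a * r) + sin a * (sin a * r) = (cos a * cos a + sin a * sin a) * r" by algebra
  then show ?thesis by (simp add: sin_cos_squared_add3)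
qed

lemma polar_det: "\<bar>det (matrix (polar' x))\<bar> = \<bar>x$2\<bar>"
proof -
  have "det (matrix (polar' x)) = - x$2"
    by (simp add: det_2 matrix_def polar'_def axis_def exp_Euler cos_of_real sin_of_real algebra_simps trig1)
  then show ?thesis by simp
qed

lemma v2c_polar: "v2c (polar x) = complex_of_real (x$2) * exp (\<i> * complex_of_real (x$1))"
  by (simp add: polar_def)



lemma polar_integral:
  fixes f :: "complex \<Rightarrow> real" and s1 s2 :: real
  assumes s1: "0 < s1" and s12: "s1 < s2"
    and cf: "continuous_on {z. s1 \<le> cmod z \<and> cmod z \<le> s2} f"
  shows "(f has_integral integral (cbox (0,s1) (2*pi,s2))
            (\<lambda>q. snd q * f (complex_of_real (snd q) * exp (\<i> * complex_of_real (fst q)))))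
         (cball 0 s2 - cball 0 s1)"
proof -
  define S :: "(real^2) set" where "S = {x. 0 \<le> x$1 \<and> x$1 < 2*pi \<and> s1 < x$2 \<and> x$2 \<le> s2}"
  define a where "a = p2v (0,s1)"
  define b where "b = p2v (2*pi,s2)"
  define K where "K = {z. s1 \<le> cmod z \<and> cmod z \<le> s2}"
  define H where "H x = \<bar>x$2\<bar> * f (v2c (polar x))" for x
  have normp: "cmod (v2c (polar x)) = \<bar>x$2\<bar>" for x
    by (simp add: v2c_polar norm_mult)
  have SB: "S \<subseteq> cbox a b" unfolding S_def a_def b_def by (auto simp: mem_cbox2)
  have polB: "v2c (polar x) \<in> K" if "x \<in> cbox a b" for x
    using that s1 unfolding a_def b_def K_def by (auto simp: mem_cbox2 normp)
  have cpol: "continuous_on UNIV (\<lambda>x. v2c (polar x))"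
  proof -
    have "continuous_on UNIV polar"
      using polar_deriv has_derivative_continuous_on by blast
    moreover have "continuous_on UNIV v2c"
      using linear_v2c linear_continuous_on linear_conv_bounded_linear by blast
    ultimately show ?thesis using continuous_on_compose2 by blast
  qed
  have cH: "continuous_on (cbox a b) H"
  proof -
    have "continuous_on (cbox a b) (\<lambda>x. f (v2c (polar x)))"
      using continuous_on_compose2[OF cf continuous_on_subset[OF cpol]] polB[unfolded K_def] by blast
    then show ?thesis unfolding H_def
      by (intro continuous_intros) auto
  qed
  have Sleb: "S \<in> sets lebesgue"
  proof -
    have "S = {x. 0 \<le> x$1} \<inter> {x. x$1 < 2*pi} \<inter> {x. s1 < x$2} \<inter> {x. x$2 \<le> s2}"
      unfolding S_def by auto
    moreover have "closed {x::real^2. 0 \<le> x$1}" "open {x::real^2. x$1 < 2*pi}"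
         "open {x::real^2. s1 < x$2}" "closed {x::real^2. x$2 \<le> s2}"
      by (auto intro!: closed_Collect_le open_Collect_less continuous_intros)
    ultimately have "S \<in> sets borel" by auto
    moreover have "sets borel \<subseteq> sets (lebesgue :: (real^2) measure)" by force
    ultimately show ?thesis by blast
  qed
  have inj: "inj_on polar S"
  proof
    fix x y assume x: "x \<in> S" and y: "y \<in> S" and e: "polar x = polar y"
    then have e2: "v2c (polar x) = v2c (polar y)" by simp
    have "x$2 = y$2" using arg_cong[OF e2, of cmod] x y unfolding normp S_def using s1 by auto
    moreover have "Arg2pi (v2c (polar x)) = x$1"
      using x s1 by (intro Arg2pi_unique[of "x$2"]) (auto simp: S_def v2c_polar)
    moreover have "Arg2pi (v2c (polar y)) = y$1"
      using y s1 by (intro Arg2pi_unique[of "y$2"]) (auto simp: S_def v2c_polar)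
    ultimately show "x = y" using e2 vec2_eq by metis
  qed
  have img: "v2c ` polar ` S = cball 0 s2 - cball 0 s1"
  proof (rule set_eqI, rule iffI)
    fix z :: complex assume "z \<in> v2c ` polar ` S"
    then obtain x where "x \<in> S" "z = v2c (polar x)" by blast
    then show "z \<in> cball 0 s2 - cball 0 s1" using s1 normp[of x] by (auto simp: S_def)
  next
    fix z :: complex assume z: "z \<in> cball 0 s2 - cball 0 s1"
    define x where "x = p2v (Arg2pi z, cmod z)"
    have "x \<in> S" using z Arg2pi[of z] by (auto simp: S_def x_def)
    moreover have "v2c (polar x) = z" unfolding x_def v2c_polar using Arg2pi_eq[of z] by simp
    ultimately show "z \<in> v2c ` polar ` S" by blast
  qed
  define fv :: "real^2 \<Rightarrow> real^1" where "fv y = vec (f (v2c y))" for y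
  have eqf: "\<bar>det (matrix (polar' x))\<bar> *\<^sub>R fv (polar x) = vec (H x)" for x
    unfolding polar_det fv_def H_def vec_scaleR by simp
  have vHB: "(\<lambda>x. vec (H x) :: real^1) absolutely_integrable_on cbox a b"
    by (rule absolutely_integrable_continuous) (unfold vec_def, intro continuous_on_vec_lambda cH)
  have vHS: "(\<lambda>x. vec (H x) :: real^1) absolutely_integrable_on S"
    using set_integrable_subset[OF vHB Sleb SB] .
  have cov: "fv absolutely_integrable_on polar ` S \<and>
        integral (polar ` S) fv = integral S (\<lambda>x. vec (H x) :: real^1)"
    using has_absolute_integral_change_of_variables[OF Sleb polar_deriv inj,
       of fv "integral S (\<lambda>x. vec (H x))", unfolded eqf] vHS by simp
  have 1: "(fv has_integral integral S (\<lambda>x. vec (H x) :: real^1)) (polar ` S)"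
    using cov set_lebesgue_integral_eq_integral(1)[OF conjunct1[OF cov]] integrable_integral by metis
  have 2: "((\<lambda>y. f (v2c y)) has_integral integral S H) (polar ` S)"
  proof -
    have "((\<lambda>y. fv y $ 1) has_integral integral S (\<lambda>x. vec (H x) :: real^1) $ 1) (polar ` S)"
      using has_integral_linear[OF 1 bounded_linear_vec_nth] by (simp add: o_def)
    moreover have "integral S (\<lambda>x. vec (H x) :: real^1) $ 1 = integral S H"
      using integral_component_eq_cart[of "\<lambda>x. vec (H x) :: real^1" S 1] 
        set_lebesgue_integral_eq_integral(1)[OF vHS] by simp
    ultimately show ?thesis by (simp add: fv_def)
  qed
  have 3: "integral S H = integral (cbox a b) H"
  proof (rule integral_spike_set)
    have "{x \<in> S - cbox a b. H x \<noteq> 0} = {}" using SB by blast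
    then show "negligible {x \<in> S - cbox a b. H x \<noteq> 0}" by (metis negligible_empty)
    have "cbox a b - S \<subseteq> cbox a b - box a b"
      unfolding S_def a_def b_def by (auto simp: mem_cbox2 mem_box_cart(1) forall_2)
    then show "negligible {x \<in> cbox a b - S. H x \<noteq> 0}"
      by (intro negligible_subset[OF negligible_frontier_interval[of a b]]) blast
  qed
  have 4: "integral (cbox a b) H = integral (cbox (0,s1) (2*pi,s2)) (H \<circ> p2v)"
  proof -
    have "H integrable_on cbox a b" using cH integrable_continuous by blast
    from transfer_p[OF this[THEN integrable_integral]]
    have "((H \<circ> p2v) has_integral integral (cbox a b) H) (cbox (0,s1) (2*pi,s2))"
      unfolding a_def b_def v2p_p2v .
    then show ?thesis by (rule integral_unique[symmetric])
  qed
  have 5: "integral (cbox (0,s1) (2*pi,s2)) (H \<circ> p2v) = integral (cbox (0,s1) (2*pi,s2))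
            (\<lambda>q. snd q * f (complex_of_real (snd q) * exp (\<i> * complex_of_real (fst q))))"
  proof (rule integral_cong)
    fix q :: "real \<times> real" assume "q \<in> cbox (0,s1) (2*pi,s2)"
    then have "snd q \<ge> s1" by (cases q) auto
    then show "(H \<circ> p2v) q = snd q * f (complex_of_real (snd q) * exp (\<i> * complex_of_real (fst q)))"
      using s1 by (simp add: H_def v2c_polar)
  qed
  have "bounded (polar ` S)"
  proof -
    have "polar ` S \<subseteq> c2v ` cball 0 s2" using img by force
    moreover have "bounded (c2v ` cball 0 s2)"
      using bounded_linear_image[OF bounded_cball] linear_c2v linear_conv_bounded_linear by blast
    ultimately show ?thesis using bounded_subset by blast
  qed
  from transfer_c[OF this 2] have "(f has_integral integral S H) (cball 0 s2 - cball 0 s1)"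
    unfolding img by (simp add: o_def)
  then show ?thesis unfolding 3 4 5 .
qed



locale smD =
  fixes U :: "complex set" and D :: "bool list \<Rightarrow> complex \<Rightarrow> real"
  assumes openU: "open U"
  and dD: "\<And>l z. z \<in> U \<Longrightarrow> (D l has_derivative (\<lambda>h. Re h * D (True # l) z + Im h * D (False # l) z)) (at z)"
begin

lemma contD: "z \<in> U \<Longrightarrow> isCont (D l) z"
  using dD has_derivative_continuous by blast

lemma contD_on: "continuous_on U (D l)"
  using contD continuous_at_imp_continuous_on by blast

lemma chainD:
  assumes c: "(c has_vector_derivative c') (at t within X)" and ct: "c t \<in> U"
  shows "((\<lambda>t. D l (c t)) has_real_derivative (Re c' * D (True#l) (c t) + Im c' * D (False#l) (c t))) (at t within X)"
proof -
  have c2: "(c has_derivative (\<lambda>h. h *\<^sub>R c')) (at t within X)" using c by (simp add: has_vector_derivative_def)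
  from has_derivative_compose[OF c2 dD[OF ct, of l]]
  show ?thesis unfolding has_field_derivative_def
    by (rule has_derivative_eq_rhs) (auto simp: algebra_simps)
qed

lemma px:
  assumes fe: "\<And>w. w \<in> U \<Longrightarrow> f w = D l w" and z: "z \<in> U"
  shows "partial_x f z = D (True#l) z"
proof -
  have v: "((\<lambda>t::real. z + complex_of_real t) has_vector_derivative 1) (at 0)"
    using has_vector_derivative_real_field[of "\<lambda>w. z + w" 1 0] by (auto intro!: derivative_eq_intros)
  have d: "((\<lambda>t. D l (z + complex_of_real t)) has_real_derivative D (True#l) z) (at 0)"
    using chainD[OF v, of l] z by simp
  define S where "S = (\<lambda>t::real. z + complex_of_real t) -` U"
  have "open S" unfolding S_def by (rule open_vimage[OF openU]) (intro continuous_intros)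
  have d2: "((\<lambda>t. f (z + complex_of_real t)) has_real_derivative D (True#l) z) (at 0)"
    by (rule has_field_derivative_transform_within_open[OF d \<open>open S\<close>]) (use z fe in \<open>auto simp: S_def\<close>)
  show ?thesis unfolding partial_x_def using DERIV_imp_deriv[OF d2] .
qed

lemma py:
  assumes fe: "\<And>w. w \<in> U \<Longrightarrow> f w = D l w" and z: "z \<in> U"
  shows "partial_y f z = D (False#l) z"
proof -
  have v: "((\<lambda>t::real. z + \<i> * complex_of_real t) has_vector_derivative \<i>) (at 0)"
    using has_vector_derivative_real_field[of "\<lambda>w. z + \<i> * w" \<i> 0] by (auto intro!: derivative_eq_intros)
  have d: "((\<lambda>t. D l (z + \<i> * complex_of_real t)) has_real_derivative D (False#l) z) (at 0)"
    using chainD[OF v, of l] z by simp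
  define S where "S = (\<lambda>t::real. z + \<i> * complex_of_real t) -` U"
  have "open S" unfolding S_def by (rule open_vimage[OF openU]) (intro continuous_intros)
  have d2: "((\<lambda>t. f (z + \<i> * complex_of_real t)) has_real_derivative D (False#l) z) (at 0)"
    by (rule has_field_derivative_transform_within_open[OF d \<open>open S\<close>]) (use z fe in \<open>auto simp: S_def\<close>)
  show ?thesis unfolding partial_y_def using DERIV_imp_deriv[OF d2] .
qed

definition pp :: "real \<Rightarrow> real \<Rightarrow> complex" where
  "pp r \<theta> = complex_of_real r * exp (\<i> * complex_of_real \<theta>)"

lemma Re_pp: "Re (pp r \<theta>) = r * cos \<theta>" and Im_pp: "Im (pp r \<theta>) = r * sin \<theta>"
  by (simp_all add: pp_def Re_exp Im_exp)

lemma norm_pp: "cmod (pp r \<theta>) = \<bar>r\<bar>"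
  by (simp add: pp_def norm_mult)

lemma pp_r:
  assumes "pp r \<theta> \<in> U"
  shows "((\<lambda>r. D l (pp r \<theta>)) has_real_derivative
            (cos \<theta> * D (True#l) (pp r \<theta>) + sin \<theta> * D (False#l) (pp r \<theta>))) (at r within X)"
proof -
  have v: "((\<lambda>r. pp r \<theta>) has_vector_derivative exp (\<i> * complex_of_real \<theta>)) (at r within X)"
    unfolding pp_def
    using has_vector_derivative_real_field[of "\<lambda>w. w * exp (\<i> * complex_of_real \<theta>)" "exp (\<i> * complex_of_real \<theta>)" r X]
    by (auto intro!: derivative_eq_intros)
  show ?thesis using chainD[OF v assms, of l] by (simp add: Re_exp Im_exp)
qed

lemma pp_t:
  assumes "pp r \<theta> \<in> U"
  shows "((\<lambda>\<theta>. D l (pp r \<theta>)) has_real_derivative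
            (- (r * sin \<theta>) * D (True#l) (pp r \<theta>) + r * cos \<theta> * D (False#l) (pp r \<theta>))) (at \<theta> within X)"
proof -
  have v: "((\<lambda>\<theta>. pp r \<theta>) has_vector_derivative complex_of_real r * (exp (\<i> * complex_of_real \<theta>) * \<i>)) (at \<theta> within X)"
  proof -
    have "((\<lambda>w. complex_of_real r * exp (\<i> * w)) has_field_derivative complex_of_real r * (exp (\<i> * complex_of_real \<theta>) * \<i>)) (at (complex_of_real \<theta>))"
      by (auto intro!: derivative_eq_intros)
    from has_vector_derivative_real_field[OF this] show ?thesis unfolding pp_def .
  qed
  show ?thesis using chainD[OF v assms, of l] by (simp add: Re_exp Im_exp)
qed

end



context smD begin

lemma cont_pp: "continuous_on A (\<lambda>q::real\<times>real. pp (snd q) (fst q))"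
  unfolding pp_def by (intro continuous_intros)

lemma contD_pp:
  assumes "\<And>q. q \<in> A \<Longrightarrow> pp (snd q) (fst q) \<in> U"
  shows "continuous_on A (\<lambda>q. D l (pp (snd q) (fst q)))"
  using continuous_on_compose2[OF contD_on cont_pp] assms by blast

lemma contD_pp1:
  assumes "\<And>t. t \<in> A \<Longrightarrow> pp r t \<in> U"
  shows "continuous_on A (\<lambda>t. D l (pp r t))"
proof -
  have "continuous_on A (\<lambda>t. pp r t)" unfolding pp_def by (intro continuous_intros)
  then show ?thesis using continuous_on_compose2[OF contD_on] assms by blast
qed

lemma contD_pp2:
  assumes "\<And>r. r \<in> A \<Longrightarrow> pp r t \<in> U"
  shows "continuous_on A (\<lambda>r. D l (pp r t))"
proof -
  have "continuous_on A (\<lambda>r. pp r t)" unfolding pp_def by (intro continuous_intros)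
  then show ?thesis using continuous_on_compose2[OF contD_on] assms by blast
qed

lemma pp_2pi: "pp r (2*pi) = pp r 0"
  by (simp add: pp_def complex_eq_iff Re_exp Im_exp)

end

locale smG = smD +
  fixes s :: real
  assumes s: "0 < s" and sub: "cball 0 s - {0} \<subseteq> U"
begin

lemma ppU: "0 < r \<Longrightarrow> r \<le> s \<Longrightarrow> pp r t \<in> U"
  using sub norm_pp[of r t] by auto

definition Phi :: "real \<Rightarrow> real" where
  "Phi r = integral {0..2*pi} (\<lambda>t. r * (cos t * D [True] (pp r t) + sin t * D [False] (pp r t)))"

definition Fd :: "real \<Rightarrow> real" where
  "Fd r = integral {0..2*pi} (\<lambda>t. D [] (pp r t))"

lemma Fd_deriv:
  assumes r: "0 < r" "r < s"
  shows "(Fd has_real_derivative Phi r / r) (at r)"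
proof -
  define fx where "fx x t = cos t * D [True] (pp x t) + sin t * D [False] (pp x t)" for x t
  have inU: "\<And>x t. x \<in> {0<..<s} \<Longrightarrow> pp x t \<in> U" using ppU by auto
  have "((\<lambda>x. integral (cbox 0 (2*pi)) (\<lambda>t. D [] (pp x t))) has_field_derivative
          integral (cbox 0 (2*pi)) (fx r)) (at r within {0<..<s})"
  proof (rule leibniz_rule_field_derivative)
    show "((\<lambda>x. D [] (pp x t)) has_field_derivative fx x t) (at x within {0<..<s})"
      if "x \<in> {0<..<s}" for x t
      unfolding fx_def using pp_r[OF inU[OF that], of "[]"] by simp
    show "(\<lambda>t. D [] (pp x t)) integrable_on cbox 0 (2 * pi)" if "x \<in> {0<..<s}" for x
      by (rule integrable_continuous, rule contD_pp1) (use inU that in auto)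
    have c1: "continuous_on ({0<..<s} \<times> cbox 0 (2 * pi)) (\<lambda>q. D l (pp (fst q) (snd q)))" for l
    proof -
      have "continuous_on ({0<..<s} \<times> cbox 0 (2 * pi)) (\<lambda>q::real\<times>real. pp (fst q) (snd q))"
        unfolding pp_def by (intro continuous_intros)
      then show ?thesis using continuous_on_compose2[OF contD_on] inU by force
    qed
    show "continuous_on ({0<..<s} \<times> cbox 0 (2 * pi)) (\<lambda>(x, t). fx x t)"
      unfolding fx_def case_prod_beta by (intro continuous_intros c1)
  qed (use r in auto)
  moreover have "integral (cbox 0 (2*pi)) (fx r) = Phi r / r"
    unfolding Phi_def fx_def using r by (simp add: integral_mult_right)
  ultimately have "(Fd has_field_derivative Phi r / r) (at r within {0<..<s})"
    unfolding Fd_def by simp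
  moreover have "at r within {0<..<s} = at r" by (rule at_within_open) (use r in auto)
  ultimately show ?thesis by simp
qed

lemma Phi_integral:
  assumes t: "0 < t" "t \<le> s"
  shows "((\<lambda>\<theta>. t * (cos \<theta> * D [True] (pp t \<theta>) + sin \<theta> * D [False] (pp t \<theta>))) has_integral Phi t) {0..2*pi}"
proof -
  have "continuous_on {0..2*pi} (\<lambda>\<theta>. t * (cos \<theta> * D [True] (pp t \<theta>) + sin \<theta> * D [False] (pp t \<theta>)))"
    by (intro continuous_intros contD_pp1) (use ppU t in auto)
  then show ?thesis unfolding Phi_def using integrable_continuous_real integrable_integral by blast
qed

lemma K_integral:
  assumes t: "0 < t" "t \<le> s"
  shows "((\<lambda>\<theta>. t * (cos \<theta> * D [False] (pp t \<theta>) - sin \<theta> * D [True] (pp t \<theta>))) has_integral 0) {0..2*pi}"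
proof -
  have "((\<lambda>\<theta>. t * (cos \<theta> * D [False] (pp t \<theta>) - sin \<theta> * D [True] (pp t \<theta>))) has_integral
         (D [] (pp t (2*pi)) - D [] (pp t 0))) {0..2*pi}"
  proof (rule fundamental_theorem_of_calculus)
    fix x assume "x \<in> {0..2*pi}"
    have "((\<lambda>\<theta>. D [] (pp t \<theta>)) has_real_derivative
            (- (t * sin x) * D [True] (pp t x) + t * cos x * D [False] (pp t x))) (at x within {0..2*pi})"
      by (rule pp_t) (use ppU t in auto)
    then show "((\<lambda>\<theta>. D [] (pp t \<theta>)) has_vector_derivative
           t * (cos x * D [False] (pp t x) - sin x * D [True] (pp t x))) (at x within {0..2*pi})"
      unfolding has_real_derivative_iff_has_vector_derivative[symmetric]
      by (rule DERIV_cong) (simp add: algebra_simps)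
  qed simp
  then show ?thesis by (simp add: pp_2pi)
qed

lemma circle_eq:
  assumes gD: "\<And>z. z \<in> U \<Longrightarrow> g z = D [] z" and t: "0 < t" "t \<le> s"
  shows "circle_integral_dzbar (eta_coeff g) t = complex_of_real (Phi t / (2*pi))"
proof -
  define A where "A \<theta> = t * (cos \<theta> * D [True] (pp t \<theta>) + sin \<theta> * D [False] (pp t \<theta>))" for \<theta>
  define K where "K \<theta> = t * (cos \<theta> * D [False] (pp t \<theta>) - sin \<theta> * D [True] (pp t \<theta>))" for \<theta>
  have pxg: "partial_x g z = D [True] z" if "z \<in> U" for z using px[of g "[]", OF gD that] by simp
  have pyg: "partial_y g z = D [False] z" if "z \<in> U" for z using py[of g "[]", OF gD that] by simp
  have eq: "eta_coeff g (complex_of_real t * exp (\<i> * complex_of_real \<theta>)) *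
              cnj (\<i> * complex_of_real t * exp (\<i> * complex_of_real \<theta>)) =
            complex_of_real (A \<theta> / (2*pi)) + \<i> * complex_of_real (K \<theta> / (2*pi))" for \<theta>
  proof -
    have u: "pp t \<theta> \<in> U" using ppU t by auto
    have e: "complex_of_real t * exp (\<i> * complex_of_real \<theta>) = pp t \<theta>" by (simp add: pp_def)
    show ?thesis unfolding e eta_coeff_def pxg[OF u] pyg[OF u] A_def K_def
      by (simp add: complex_eq_iff pp_def Re_exp Im_exp field_simps)
  qed
  have "((\<lambda>\<theta>. complex_of_real (A \<theta> / (2*pi)) + \<i> * complex_of_real (K \<theta> / (2*pi))) has_integral
          (complex_of_real (Phi t / (2*pi)) + \<i> * complex_of_real (0 / (2*pi)))) {0..2*pi}"
    apply (intro has_integral_add has_integral_mult_right has_integral_of_real has_integral_divide)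
    using Phi_integral[OF t] K_integral[OF t] unfolding A_def K_def by auto
  then have "((\<lambda>\<theta>. eta_coeff g (complex_of_real t * exp (\<i> * complex_of_real \<theta>)) *
              cnj (\<i> * complex_of_real t * exp (\<i> * complex_of_real \<theta>))) has_integral
          complex_of_real (Phi t / (2*pi))) {0..2*pi}"
    unfolding eq by simp
  then show ?thesis unfolding circle_integral_dzbar_def by (rule integral_unique)
qed

lemma annulus_eq:
  assumes s1: "0 < s1" and s12: "s1 < s2" and s2: "s2 \<le> s"
  shows "((\<lambda>z. (D [True,True] z + D [False,False] z) / (2*pi)) has_integral (Phi s2 - Phi s1) / (2*pi))
           (cball 0 s2 - cball 0 s1)"
proof -
  define Lf where "Lf z = (D [True,True] z + D [False,False] z) / (2*pi)" for z
  define B where "B = cbox (0::real,s1) (2*pi,s2)"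
  have inK: "z \<in> U" if "s1 \<le> cmod z" "cmod z \<le> s2" for z using that sub s1 s2 by auto
  have cLf: "continuous_on {z. s1 \<le> cmod z \<and> cmod z \<le> s2} Lf"
    unfolding Lf_def
    by (intro continuous_intros continuous_on_subset[OF contD_on]) (use inK in auto)
  have P: "(Lf has_integral integral B (\<lambda>q. snd q * Lf (pp (snd q) (fst q)))) (cball 0 s2 - cball 0 s1)"
    using polar_integral[OF s1 s12 cLf] unfolding B_def pp_def .
  have inB: "pp (snd q) (fst q) \<in> U" if "q \<in> B" for q
    using that s1 s2 ppU by (cases q) (auto simp: B_def)
  define AA where "AA q = (let t = fst q; r = snd q; p = pp r t in
      cos t * D [True] p + sin t * D [False] p + r * (cos t * (cos t * D [True,True] p + sin t * D [False,True] p)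
       + sin t * (cos t * D [True,False] p + sin t * D [False,False] p)))" for q
  define BB where "BB q = (let t = fst q; r = snd q; p = pp r t in
      - sin t * D [False] p + cos t * (- (r * sin t) * D [True,False] p + r * cos t * D [False,False] p)
      - cos t * D [True] p - sin t * (- (r * sin t) * D [True,True] p + r * cos t * D [False,True] p))" for q
  have sumAB: "snd q * Lf (pp (snd q) (fst q)) = (AA q + BB q) / (2*pi)" for q
  proof -
    have "AA q + BB q = snd q * (D [True,True] (pp (snd q) (fst q)) + D [False,False] (pp (snd q) (fst q))) *
           (cos (fst q) * cos (fst q) + sin (fst q) * sin (fst q))"
      unfolding AA_def BB_def Let_def by algebra
    then have "AA q + BB q = snd q * (D [True,True] (pp (snd q) (fst q)) + D [False,False] (pp (snd q) (fst q)))"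
      by (simp only: sin_cos_squared_add3 mult_1_right)
    then show ?thesis unfolding Lf_def by simp
  qed
  have cq: "continuous_on B (\<lambda>q. D l (pp (snd q) (fst q)))" for l by (rule contD_pp) (use inB in auto)
  have cAA: "continuous_on B AA" unfolding AA_def Let_def by (intro continuous_intros cq)
  have cBB: "continuous_on B BB" unfolding BB_def Let_def by (intro continuous_intros cq)
  have box1: "cbox (0::real) (2*pi) = {0..2*pi}" "cbox s1 s2 = {s1..s2}" by auto
  have intA: "integral B AA = Phi s2 - Phi s1"
  proof -
    have "integral B AA = integral {0..2*pi} (\<lambda>t. integral {s1..s2} (\<lambda>r. AA (t,r)))"
      using integral_prod_continuous[OF cAA[unfolded B_def]] unfolding B_def box1 .
    also have "\<dots> = integral {0..2*pi} (\<lambda>t. s2 * (cos t * D [True] (pp s2 t) + sin t * D [False] (pp s2 t))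
                   - s1 * (cos t * D [True] (pp s1 t) + sin t * D [False] (pp s1 t)))"
    proof (rule integral_cong)
      fix t assume t: "t \<in> {0..2*pi}"
      have "((\<lambda>r. AA (t,r)) has_integral (s2 * (cos t * D [True] (pp s2 t) + sin t * D [False] (pp s2 t))
                   - s1 * (cos t * D [True] (pp s1 t) + sin t * D [False] (pp s1 t)))) {s1..s2}"
      proof (rule fundamental_theorem_of_calculus)
        fix r assume r: "r \<in> {s1..s2}"
        have u: "pp r t \<in> U" using r s1 s2 ppU by auto
        have "((\<lambda>r. r * (cos t * D [True] (pp r t) + sin t * D [False] (pp r t))) has_real_derivative
                AA (t,r)) (at r within {s1..s2})"
          unfolding AA_def Let_def fst_conv snd_conv
          by (rule derivative_eq_intros pp_r[OF u] refl)+ (simp add: algebra_simps)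
        then show "((\<lambda>r. r * (cos t * D [True] (pp r t) + sin t * D [False] (pp r t))) has_vector_derivative
                AA (t,r)) (at r within {s1..s2})"
          using has_real_derivative_iff_has_vector_derivative by blast
      qed (use s12 in auto)
      then show "integral {s1..s2} (\<lambda>r. AA (t,r)) = s2 * (cos t * D [True] (pp s2 t) + sin t * D [False] (pp s2 t))
                   - s1 * (cos t * D [True] (pp s1 t) + sin t * D [False] (pp s1 t))"
        by (rule integral_unique)
    qed
    also have "\<dots> = Phi s2 - Phi s1"
      using has_integral_diff[OF Phi_integral[of s2] Phi_integral[of s1]] s1 s12 s2 by (auto intro: integral_unique)
    finally show ?thesis .
  qed
  have intB: "integral B BB = 0"
  proof -
    have cBB': "continuous_on (cbox (0, s1) (2 * pi, s2)) (\<lambda>(x, y). BB (x, y))"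
      using cBB unfolding B_def by simp
    have "integral B BB = integral {0..2*pi} (\<lambda>t. integral {s1..s2} (\<lambda>r. BB (t,r)))"
      using integral_prod_continuous[OF cBB[unfolded B_def]] unfolding B_def box1 .
    also have "\<dots> = integral {s1..s2} (\<lambda>r. integral {0..2*pi} (\<lambda>t. BB (t,r)))"
      using integral_swap_continuous[OF cBB'] unfolding box1 .
    also have "\<dots> = integral {s1..s2} (\<lambda>r. 0)"
    proof (rule integral_cong)
      fix r assume r: "r \<in> {s1..s2}"
      have u: "pp r t \<in> U" for t using r s1 s2 ppU by auto
      have "((\<lambda>t. BB (t,r)) has_integral
          ((cos (2*pi) * D [False] (pp r (2*pi)) - sin (2*pi) * D [True] (pp r (2*pi))) -
           (cos 0 * D [False] (pp r 0) - sin 0 * D [True] (pp r 0)))) {0..2*pi}"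
      proof (rule fundamental_theorem_of_calculus)
        fix t assume t: "t \<in> {0..2*pi}"
        have "((\<lambda>t. cos t * D [False] (pp r t) - sin t * D [True] (pp r t)) has_real_derivative
                BB (t,r)) (at t within {0..2*pi})"
          unfolding BB_def Let_def fst_conv snd_conv
          by (rule derivative_eq_intros pp_t[OF u] refl)+ (simp add: algebra_simps)
        then show "((\<lambda>t. cos t * D [False] (pp r t) - sin t * D [True] (pp r t)) has_vector_derivative
                BB (t,r)) (at t within {0..2*pi})"
          using has_real_derivative_iff_has_vector_derivative by blast
      qed simp
      then show "integral {0..2*pi} (\<lambda>t. BB (t,r)) = 0"
        by (simp add: pp_2pi integral_unique)
    qed
    finally show ?thesis by simp
  qed
  have "integral B (\<lambda>q. snd q * Lf (pp (snd q) (fst q))) = (integral B AA + integral B BB) / (2*pi)"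
  proof -
    have iA: "AA integrable_on B" unfolding B_def using cAA[unfolded B_def] by (rule integrable_continuous)
    have iB: "BB integrable_on B" unfolding B_def using cBB[unfolded B_def] by (rule integrable_continuous)
    have "integral B (\<lambda>q. snd q * Lf (pp (snd q) (fst q))) = integral B (\<lambda>q. (AA q + BB q) / (2*pi))"
      unfolding sumAB ..
    also have "\<dots> = integral B (\<lambda>q. AA q + BB q) / (2*pi)" by (rule integral_divide)
    also have "\<dots> = (integral B AA + integral B BB) / (2*pi)" using integral_add[OF iA iB] by simp
    finally show ?thesis .
  qed
  with P intA intB show ?thesis unfolding Lf_def by simp
qed

end



context smD begin

lemma lap_eq:
  assumes gD: "\<And>z. z \<in> U \<Longrightarrow> g z = D [] z" and z: "z \<in> U"
  shows "omega_density g z = (D [True,True] z + D [False,False] z) / (2*pi)"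
proof -
  have pxg: "partial_x g w = D [True] w" if "w \<in> U" for w using px[of g "[]", OF gD that] by simp
  have pyg: "partial_y g w = D [False] w" if "w \<in> U" for w using py[of g "[]", OF gD that] by simp
  have "partial_x (partial_x g) z = D [True,True] z" using px[of "partial_x g" "[True]", OF pxg z] by simp
  moreover have "partial_y (partial_y g) z = D [False,False] z" using py[of "partial_y g" "[False]", OF pyg z] by simp
  ultimately show ?thesis unfolding omega_density_def laplacian_def by simp
qed

lemma lap_nonneg:
  assumes gD: "\<And>z. z \<in> U \<Longrightarrow> g z = D [] z" and sp: "semipositive_on U g" and z: "z \<in> U"
  shows "0 \<le> D [True,True] z + D [False,False] z"
proof (rule ccontr)
  define L where "L w = (D [True,True] w + D [False,False] w) / (2*pi)" for w
  assume "\<not> 0 \<le> D [True,True] z + D [False,False] z"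
  then have Lz: "L z < 0" by (simp add: L_def divide_neg_pos)
  have cL: "continuous_on U L" unfolding L_def by (intro continuous_intros contD_on) auto
  have "isCont L z" using cL openU z continuous_on_eq_continuous_at by blast
  then obtain d where d: "d > 0" "\<And>w. dist w z < d \<Longrightarrow> dist (L w) (L z) < - L z / 2"
    unfolding continuous_at_eps_delta using Lz by (metis neg_0_less_iff_less half_gt_zero)
  obtain e where e: "e > 0" "cball z e \<subseteq> U" using openU z open_contains_cball by blast
  define t where "t = min e d / 3"
  have t: "t > 0" "2 * t < e" "2 * t < d" using d e by (auto simp: t_def)
  define C where "C = cbox (Complex (-t) (-t)) (Complex t t)"
  have inC: "cmod w \<le> 2 * t" if "w \<in> C" for w
  proof -
    have "\<bar>Re w\<bar> \<le> t" "\<bar>Im w\<bar> \<le> t" using that by (auto simp: C_def in_cbox_complex_iff)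
    then show ?thesis using cmod_le[of w] by linarith
  qed
  have zwU: "z + w \<in> U" if "cmod w \<le> 2 * t" for w using e that t by (auto simp: dist_norm)
  have Lsmall: "L (z + w) \<le> L z / 2" if "cmod w \<le> 2 * t" for w
  proof -
    have "dist (z + w) z < d" using that t by (simp add: dist_norm)
    from d(2)[OF this] show ?thesis by (simp add: dist_real_def abs_less_iff)
  qed
  have ballC: "cball 0 t \<subseteq> C"
  proof
    fix w :: complex assume "w \<in> cball 0 t"
    then have "cmod w \<le> t" by simp
    then have "\<bar>Re w\<bar> \<le> t" "\<bar>Im w\<bar> \<le> t" using abs_Re_le_cmod[of w] abs_Im_le_cmod[of w] by linarith+
    then show "w \<in> C" by (auto simp: C_def in_cbox_complex_iff)
  qed
  have "0 \<le> integral (ball 0 t) (\<lambda>w. omega_density g (z + w) * (cmod (deriv (\<lambda>w. z + w) w))\<^sup>2)"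
  proof -
    have "continuous_on (cball 0 t) (\<lambda>w. z + w)" by (intro continuous_intros)
    moreover have "(\<lambda>w. z + w) holomorphic_on ball 0 t" by (intro holomorphic_intros)
    moreover have "(\<lambda>w. z + w) ` cball 0 t \<subseteq> U" using zwU t by force
    ultimately show ?thesis using sp t unfolding semipositive_on_def by blast
  qed
  also have "\<dots> = integral (ball 0 t) (\<lambda>w. L (z + w))"
  proof (rule integral_cong)
    fix w :: complex assume w: "w \<in> ball 0 t"
    have "deriv (\<lambda>w. z + w) w = 1" by (rule DERIV_imp_deriv) (auto intro!: derivative_eq_intros)
    moreover have "cmod w \<le> 2 * t" using w t by simp
    ultimately show "omega_density g (z + w) * (cmod (deriv (\<lambda>w. z + w) w))\<^sup>2 = L (z + w)"
      using lap_eq[OF gD zwU] by (simp add: L_def)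
  qed
  also have "\<dots> < 0"
  proof -
    have cC: "continuous_on C (\<lambda>w. L (z + w))"
    proof (rule continuous_on_compose2[OF cL])
      show "continuous_on C ((+) z)" by (intro continuous_intros)
      show "(+) z ` C \<subseteq> U" using zwU inC by blast
    qed
    have "(\<lambda>w. L (z + w)) absolutely_integrable_on C"
      unfolding C_def by (rule absolutely_integrable_continuous) (use cC C_def in simp)
    moreover have "ball 0 t \<in> sets lebesgue" by simp
    moreover have "ball 0 t \<subseteq> C" using ballC by auto
    ultimately have "(\<lambda>w. L (z + w)) absolutely_integrable_on ball 0 t" by (rule set_integrable_subset)
    then have int1: "(\<lambda>w. L (z + w)) integrable_on ball 0 t" using set_lebesgue_integral_eq_integral(1) by blast
    note m = has_integral_measure_lborel[of "ball (0::complex) t", OF borel_open[OF open_ball] emeasure_bounded_finite[OF bounded_ball]]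
    have c: "((\<lambda>x. L z / 2) has_integral (L z / 2) * Henstock_Kurzweil_Integration.content (ball (0::complex) t)) (ball (0::complex) t)"
      using has_integral_mult_right[OF m, of "L z / 2"] by simp
    have "integral (ball 0 t) (\<lambda>w. L (z + w)) \<le> integral (ball (0::complex) t) (\<lambda>w. L z / 2)"
    proof (rule integral_le[OF int1])
      show "(\<lambda>w. L z / 2) integrable_on ball (0::complex) t" using c by blast
      show "L (z + w) \<le> L z / 2" if "w \<in> ball 0 t" for w using Lsmall that t by simp
    qed
    also have "\<dots> = (L z / 2) * Henstock_Kurzweil_Integration.content (ball (0::complex) t)"
      using c by (rule integral_unique)
    also have "\<dots> < 0" using Lz content_ball_pos[OF t(1), of "0::complex"] by (simp add: mult_neg_pos)
    finally show ?thesis .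
  qed
  finally show False by simp
qed

end



lemma subpoly_ln:
  assumes sp: "subpolynomial \<mu>" and n: "n > 0"
  shows "eventually (\<lambda>r. ln (\<mu> (1/r)) \<le> n * ln (1/r)) (at_right 0)"
proof -
  have pos: "\<And>x. x > 0 \<Longrightarrow> \<mu> x > 0" and lim: "((\<lambda>x. \<mu> x / x powr n) \<longlongrightarrow> 0) at_top"
    using sp n unfolding subpolynomial_def by auto
  have "eventually (\<lambda>x. \<mu> x / x powr n < 1) at_top"
    using order_tendstoD(2)[OF lim] by simp
  then have "eventually (\<lambda>x. ln (\<mu> x) \<le> n * ln x) at_top"
    using eventually_gt_at_top[of 0]
  proof eventually_elim
    case (elim x)
    then have "\<mu> x < x powr n" by (simp add: divide_less_eq)
    then have "ln (\<mu> x) < ln (x powr n)" using pos[of x] elim by (subst ln_less_cancel_iff) auto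
    then show ?case using elim by (simp add: ln_powr)
  qed
  moreover have "filterlim (\<lambda>r::real. 1/r) at_top (at_right 0)"
    using filterlim_inverse_at_top_right by (simp add: inverse_eq_divide)
  ultimately show ?thesis by (rule eventually_compose_filterlim)
qed

lemma ln_small: "eventually (\<lambda>x::real. ln x \<le> K) (at_right 0)"
  using ln_at_0 unfolding filterlim_at_bot by blast

lemma ex_at_right: "eventually P (at_right (0::real)) \<Longrightarrow> \<exists>x. P x"
  by (rule eventually_happens') (simp_all add: trivial_limit_at_right_real)

lemma asym_lower:
  fixes G \<Psi> :: "real \<Rightarrow> real"
  assumes s: "s > 0"
    and mono: "\<And>x y. 0 < x \<Longrightarrow> x \<le> y \<Longrightarrow> y \<le> s \<Longrightarrow> \<Psi> x \<le> \<Psi> y"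
    and der: "\<And>r. 0 < r \<Longrightarrow> r < s \<Longrightarrow> (G has_real_derivative \<Psi> r / r) (at r)"
    and up: "\<And>r. 0 < r \<Longrightarrow> r \<le> s \<Longrightarrow> G r + a * ln r \<le> ln (\<mu> (1/r))"
    and sp: "subpolynomial \<mu>"
    and r0: "0 < r0" "r0 \<le> s"
  shows "-a \<le> \<Psi> r0"
proof (rule ccontr)
  assume "\<not> -a \<le> \<Psi> r0"
  define c where "c = \<Psi> r0"
  define \<delta> where "\<delta> = -a - c"
  have \<delta>: "\<delta> > 0" using \<open>\<not> -a \<le> \<Psi> r0\<close> by (simp add: \<delta>_def c_def)
  define r1 where "r1 = r0 / 2"
  have r1: "0 < r1" "r1 < r0" using r0 by (auto simp: r1_def)
  define H where "H x = G x - c * ln x" for x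
  have Hle: "H r1 \<le> H x" if x: "0 < x" "x \<le> r1" for x
  proof (rule DERIV_nonpos_imp_nonincreasing[OF x(2)])
    fix y assume y: "x \<le> y" "y \<le> r1"
    have "(H has_real_derivative (\<Psi> y / y - c * inverse y)) (at y)"
      unfolding H_def using x y r1 r0
      by (intro DERIV_diff der DERIV_cmult DERIV_ln) auto
    moreover have "\<Psi> y / y - c * inverse y \<le> 0"
    proof -
      have "\<Psi> y \<le> c" unfolding c_def using mono[of y r0] x y r1 r0 by auto
      then show ?thesis using x y by (simp add: inverse_eq_divide diff_divide_distrib[symmetric] divide_nonpos_pos)
    qed
    ultimately show "\<exists>d. (H has_real_derivative d) (at y) \<and> d \<le> 0" by blast
  qed
  have ev: "eventually (\<lambda>x. x \<in> {0<..<r1} \<and> ln (\<mu> (1/x)) \<le> (\<delta>/2) * ln (1/x) \<and> ln x \<le> 2 * H r1 / \<delta> - 1) (at_right 0)"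
    by (intro eventually_conj eventually_at_right_real[OF r1(1)] subpoly_ln[OF sp] ln_small) (use \<delta> in auto)
  from ex_at_right[OF ev] obtain x where x0: "x \<in> {0<..<r1}" and x3: "ln (\<mu> (1/x)) \<le> (\<delta>/2) * ln (1/x)"
      and x4: "ln x \<le> 2 * H r1 / \<delta> - 1" by blast
  have x: "0 < x" "x < r1" "ln (\<mu> (1/x)) \<le> (\<delta>/2) * ln (1/x)" "ln x \<le> 2 * H r1 / \<delta> - 1"
    using x0 x3 x4 by auto
  have "H r1 + c * ln x \<le> G x" using Hle[of x] x by (simp add: H_def)
  also have "G x \<le> ln (\<mu> (1/x)) - a * ln x" using up[of x] x r1 r0 by auto
  also have "\<dots> \<le> (\<delta>/2) * (- ln x) - a * ln x" using x(3) x(1) by (simp add: ln_div)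
  finally have 1: "H r1 + c * ln x \<le> (\<delta>/2) * (- ln x) - a * ln x" .
  have 2: "(\<delta>/2) * (- ln x) - a * ln x - c * ln x = (\<delta>/2) * ln x" by (simp add: \<delta>_def field_simps)
  have 3: "(\<delta>/2) * ln x \<le> (\<delta>/2) * (2 * H r1 / \<delta> - 1)"
    using x(4) \<delta> by (intro mult_left_mono) auto
  have 4: "(\<delta>/2) * (2 * H r1 / \<delta> - 1) = H r1 - \<delta>/2" using \<delta> by (simp add: field_simps)
  show False using 1 2 3 4 \<delta> by linarith
qed

lemma asym_upper:
  fixes G \<Psi> :: "real \<Rightarrow> real"
  assumes s: "s > 0"
    and der: "\<And>r. 0 < r \<Longrightarrow> r < s \<Longrightarrow> (G has_real_derivative \<Psi> r / r) (at r)"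
    and low: "\<And>r. 0 < r \<Longrightarrow> r \<le> s \<Longrightarrow> - ln (\<mu> (1/r)) \<le> G r + a * ln r"
    and sp: "subpolynomial \<mu>"
    and \<delta>: "\<delta> > 0"
  shows "\<exists>r1. 0 < r1 \<and> r1 < s \<and> \<Psi> r1 \<le> -a + \<delta>"
proof (rule ccontr)
  assume "\<nexists>r1. 0 < r1 \<and> r1 < s \<and> \<Psi> r1 \<le> -a + \<delta>"
  then have big: "\<And>r. 0 < r \<Longrightarrow> r < s \<Longrightarrow> \<Psi> r > -a + \<delta>" by force
  define c where "c = -a + \<delta>"
  define r1 where "r1 = s / 2"
  have r1: "0 < r1" "r1 < s" using s by (auto simp: r1_def)
  define H where "H x = G x - c * ln x" for x
  have Hle: "H x \<le> H r1" if x: "0 < x" "x \<le> r1" for x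
  proof (rule DERIV_nonneg_imp_nondecreasing[OF x(2)])
    fix y assume y: "x \<le> y" "y \<le> r1"
    have "(H has_real_derivative (\<Psi> y / y - c * inverse y)) (at y)"
      unfolding H_def using x y r1
      by (intro DERIV_diff der DERIV_cmult DERIV_ln) auto
    moreover have "\<Psi> y / y - c * inverse y \<ge> 0"
    proof -
      have "\<Psi> y \<ge> c" unfolding c_def using big[of y] x y r1 by auto
      then show ?thesis using x y by (simp add: inverse_eq_divide diff_divide_distrib[symmetric])
    qed
    ultimately show "\<exists>d. (H has_real_derivative d) (at y) \<and> d \<ge> 0" by blast
  qed
  have ev: "eventually (\<lambda>x. x \<in> {0<..<r1} \<and> ln (\<mu> (1/x)) \<le> (\<delta>/2) * ln (1/x) \<and> ln x \<le> - 2 * H r1 / \<delta> - 1) (at_right 0)"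
    by (intro eventually_conj eventually_at_right_real[OF r1(1)] subpoly_ln[OF sp] ln_small) (use \<delta> in auto)
  from ex_at_right[OF ev] obtain x where x0: "x \<in> {0<..<r1}" and x3: "ln (\<mu> (1/x)) \<le> (\<delta>/2) * ln (1/x)"
      and x4: "ln x \<le> - 2 * H r1 / \<delta> - 1" by blast
  have x: "0 < x" "x < r1" "ln (\<mu> (1/x)) \<le> (\<delta>/2) * ln (1/x)" "ln x \<le> - 2 * H r1 / \<delta> - 1"
    using x0 x3 x4 by auto
  have "(\<delta>/2) * ln x - a * ln x \<le> - ln (\<mu> (1/x)) - a * ln x" using x(3) x(1) by (simp add: ln_div)
  also have "\<dots> \<le> G x" using low[of x] x r1 by auto
  also have "G x \<le> H r1 + c * ln x" using Hle[of x] x by (simp add: H_def)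
  finally have 1: "(\<delta>/2) * ln x - a * ln x \<le> H r1 + c * ln x" .
  have 2: "(\<delta>/2) * ln x - a * ln x - c * ln x = - ((\<delta>/2) * ln x)" by (simp add: c_def algebra_simps)
  have 3: "(\<delta>/2) * ln x \<le> (\<delta>/2) * (- 2 * H r1 / \<delta> - 1)"
    using x(4) \<delta> by (intro mult_left_mono) auto
  have 4: "(\<delta>/2) * (- 2 * H r1 / \<delta> - 1) = - H r1 - \<delta>/2" using \<delta> by (simp add: field_simps)
  show False using 1 2 3 4 \<delta> by linarith
qed



theorem mainTheorem3:
  fixes s a :: real and g :: "complex \<Rightarrow> real" and U :: "complex set"
    and \<mu> :: "real \<Rightarrow> real"
  assumes "0 < s" and "s \<le> 1"
    and "open U" and "cball 0 s - {0} \<subseteq> U"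
    and "smooth_on U g"
    and "semipositive_on U g"
    and "subpolynomial \<mu>"
    and "\<forall>z \<in> cball 0 s - {0}.
           - ln (\<mu> (1 / cmod z)) \<le> g z + a * ln (cmod z) \<and>
           g z + a * ln (cmod z) \<le> ln (\<mu> (1 / cmod z))"
  shows "\<exists>I::real.
           ((\<lambda>\<epsilon>. integral (cball 0 s - cball 0 \<epsilon>) (omega_density g)) \<longlongrightarrow> I) (at_right 0) \<and>
           ((\<lambda>t. circle_integral_dzbar (eta_coeff g) t) \<longlongrightarrow> - of_real a) (at_right 0) \<and>
           0 \<le> I \<and>
           of_real I = circle_integral_dzbar (eta_coeff g) s + of_real a"
proof -
  note s = assms(1) and openU = assms(3) and sub = assms(4) and sp = assms(6) and subp = assms(7)
    and bnd = assms(8)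
  obtain D where D0: "\<And>z. z \<in> U \<Longrightarrow> D [] z = g z"
    and dD: "\<And>l z. z \<in> U \<Longrightarrow> (D l has_derivative (\<lambda>h. Re h * D (True # l) z + Im h * D (False # l) z)) (at z)"
    using assms(5) unfolding smooth_on_def by blast
  interpret smG U D s
    by unfold_locales (use openU dD s sub in auto)
  have gD: "\<And>z. z \<in> U \<Longrightarrow> g z = D [] z" using D0 by simp
  define \<Psi> where "\<Psi> r = Phi r / (2*pi)" for r
  define G where "G r = Fd r / (2*pi)" for r
  have der: "(G has_real_derivative \<Psi> r / r) (at r)" if "0 < r" "r < s" for r
  proof -
    have "((\<lambda>r. Fd r / (2*pi)) has_real_derivative (Phi r / r) / (2*pi)) (at r)"
      by (rule DERIV_cdivide[OF Fd_deriv[OF that]])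
    then show ?thesis unfolding G_def \<Psi>_def by (simp add: field_simps)
  qed
  have mono: "\<Psi> x \<le> \<Psi> y" if "0 < x" "x \<le> y" "y \<le> s" for x y
  proof (cases "x = y")
    case False
    then have xy: "x < y" using that by simp
    have "0 \<le> (Phi y - Phi x) / (2*pi)"
    proof (rule has_integral_nonneg[OF annulus_eq[OF that(1) xy that(3)]])
      fix z :: complex assume "z \<in> cball 0 y - cball 0 x"
      then have "z \<in> U" using sub that by auto
      then show "0 \<le> (D [True, True] z + D [False, False] z) / (2 * pi)"
        using lap_nonneg[OF gD sp] by simp
    qed
    then show ?thesis unfolding \<Psi>_def by (simp add: divide_simps)
  qed simp
  have bounds: "- ln (\<mu> (1/r)) \<le> G r + a * ln r \<and> G r + a * ln r \<le> ln (\<mu> (1/r))"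
    if r: "0 < r" "r \<le> s" for r
  proof -
    have pt: "- ln (\<mu> (1/r)) - a * ln r \<le> D [] (pp r t) \<and> D [] (pp r t) \<le> ln (\<mu> (1/r)) - a * ln r" for t
    proof -
      have z: "pp r t \<in> cball 0 s - {0}" using r norm_pp[of r t] by auto
      have "pp r t \<in> U" using z sub by blast
      then show ?thesis using bnd z norm_pp[of r t] r gD by force
    qed
    have int: "((\<lambda>t. D [] (pp r t)) has_integral Fd r) {0..2*pi}"
      unfolding Fd_def
      by (intro integrable_integral integrable_continuous_real contD_pp1) (use ppU r in auto)
    have c2: "Henstock_Kurzweil_Integration.content {0..2*pi} = 2*pi" by simp
    have k1: "((\<lambda>t. - ln (\<mu> (1/r)) - a * ln r) has_integral (2*pi) * (- ln (\<mu> (1/r)) - a * ln r)) {0..2*pi}"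
      using has_integral_const_real[where c="- ln (\<mu> (1/r)) - a * ln r" and a=0 and b="2*pi"] unfolding c2 by simp
    have k2: "((\<lambda>t. ln (\<mu> (1/r)) - a * ln r) has_integral (2*pi) * (ln (\<mu> (1/r)) - a * ln r)) {0..2*pi}"
      using has_integral_const_real[where c="ln (\<mu> (1/r)) - a * ln r" and a=0 and b="2*pi"] unfolding c2 by simp
    have "(2*pi) * (- ln (\<mu> (1/r)) - a * ln r) \<le> Fd r"
      by (rule has_integral_le[OF k1 int]) (use pt in auto)
    moreover have "Fd r \<le> (2*pi) * (ln (\<mu> (1/r)) - a * ln r)"
      by (rule has_integral_le[OF int k2]) (use pt in auto)
    ultimately show ?thesis unfolding G_def by (simp add: field_simps)
  qed
  have lower: "-a \<le> \<Psi> r" if "0 < r" "r \<le> s" for r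
    by (rule asym_lower[OF s mono der _ subp that]) (use bounds in auto)
  have upper: "\<exists>r1. 0 < r1 \<and> r1 < s \<and> \<Psi> r1 \<le> -a + \<delta>" if "\<delta> > 0" for \<delta>
    by (rule asym_upper[OF s der _ subp that]) (use bounds in auto)
  have lim: "(\<Psi> \<longlongrightarrow> -a) (at_right 0)"
  proof (rule tendstoI)
    fix e :: real assume e: "e > 0"
    obtain r1 where r1: "0 < r1" "r1 < s" "\<Psi> r1 \<le> -a + e/2" using upper[of "e/2"] e by auto
    have "eventually (\<lambda>x. x \<in> {0<..<r1}) (at_right 0)" by (rule eventually_at_right_real[OF r1(1)])
    then show "eventually (\<lambda>x. dist (\<Psi> x) (-a) < e) (at_right 0)"
    proof eventually_elim
      case (elim x)
      then have "-a \<le> \<Psi> x" "\<Psi> x \<le> \<Psi> r1" using lower[of x] mono[of x r1] r1 by auto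
      then show ?case using r1 e by (simp add: dist_real_def)
    qed
  qed
  have circ: "circle_integral_dzbar (eta_coeff g) t = complex_of_real (\<Psi> t)" if "0 < t" "t \<le> s" for t
    using circle_eq[OF gD that] unfolding \<Psi>_def .
  have ann: "integral (cball 0 s - cball 0 \<epsilon>) (omega_density g) = \<Psi> s - \<Psi> \<epsilon>" if "0 < \<epsilon>" "\<epsilon> < s" for \<epsilon>
  proof -
    have "integral (cball 0 s - cball 0 \<epsilon>) (omega_density g) =
          integral (cball 0 s - cball 0 \<epsilon>) (\<lambda>z. (D [True, True] z + D [False, False] z) / (2 * pi))"
    proof (rule integral_cong)
      fix z :: complex assume "z \<in> cball 0 s - cball 0 \<epsilon>"
      then have zU: "z \<in> U" using sub that by auto
      show "omega_density g z = (D [True, True] z + D [False, False] z) / (2 * pi)"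
        using lap_eq[of g z, OF gD zU] by simp
    qed
    also have "\<dots> = (Phi s - Phi \<epsilon>) / (2*pi)"
      using annulus_eq[OF that order_refl] by (rule integral_unique)
    finally show ?thesis unfolding \<Psi>_def by (simp add: diff_divide_distrib)
  qed
  define I where "I = \<Psi> s + a"
  have ev_s: "eventually (\<lambda>x. x \<in> {0<..<s}) (at_right (0::real))" by (rule eventually_at_right_real[OF s])
  have t1: "((\<lambda>\<epsilon>. integral (cball 0 s - cball 0 \<epsilon>) (omega_density g)) \<longlongrightarrow> I) (at_right 0)"
  proof -
    have "((\<lambda>\<epsilon>. \<Psi> s - \<Psi> \<epsilon>) \<longlongrightarrow> \<Psi> s - (-a)) (at_right 0)"
      by (intro tendsto_intros lim)
    then have "((\<lambda>\<epsilon>. \<Psi> s - \<Psi> \<epsilon>) \<longlongrightarrow> I) (at_right 0)" by (simp add: I_def)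
    moreover have "eventually (\<lambda>\<epsilon>. \<Psi> s - \<Psi> \<epsilon> = integral (cball 0 s - cball 0 \<epsilon>) (omega_density g)) (at_right 0)"
      using ev_s by eventually_elim (use ann in auto)
    ultimately show ?thesis by (rule Lim_transform_eventually)
  qed
  have t2: "((\<lambda>t. circle_integral_dzbar (eta_coeff g) t) \<longlongrightarrow> - of_real a) (at_right 0)"
  proof -
    have "((\<lambda>t. complex_of_real (\<Psi> t)) \<longlongrightarrow> complex_of_real (-a)) (at_right 0)"
      by (intro tendsto_intros lim)
    moreover have "eventually (\<lambda>t. complex_of_real (\<Psi> t) = circle_integral_dzbar (eta_coeff g) t) (at_right 0)"
      using ev_s by eventually_elim (use circ in auto)
    ultimately show ?thesis using Lim_transform_eventually by fastforce
  qed
  have t3: "0 \<le> I" using lower[OF s order_refl] by (simp add: I_def)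
  have t4: "complex_of_real I = circle_integral_dzbar (eta_coeff g) s + complex_of_real a"
    using circ[OF s order_refl] by (simp add: I_def)
  show ?thesis using t1 t2 t3 t4 by blast
qed



end
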